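(* Let $(M,\rho)$ be a complete metric space, let $f:M\to\mathbb{R}\cup\{+\infty\}$ be proper, lower semicontinuous and bounded below, and let $g:M\to\mathbb{R}$ be continuous with $$|\nabla f|(x)>|\nabla g|(x)\qquad\text{for all }x\in\operatorname{dom} f\setminus 0\operatorname{crit} f.$$ Then for every $x_0\in\operatorname{dom} f$ at least one of the following holds: (a) there exists $\bar x\in 0\operatorname{crit} f$ with $f(x_0)-g(x_0)\ge f(\bar x)-g(\bar x)$; (b) for every sequence of positive numbers $\varepsilon_n\searrow0$ there exists a sequence $(x_n)_{n\ge1}$ with $x_n\in\varepsilon_n\operatorname{crit} f$ for all $n$, which has no convergent subsequence, and which (together with the given $x_0$) satisfies $$\sum_{n=1}^\infty\varepsilon_n\rho(x_n,x_{n-1})<\infty\quad\text{and}\quad f(x_n)-g(x_n)\ge f(x_{n+1})-g(x_{n+1})\ \text{ for all } n\ge0.$$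
   Context: $\operatorname{dom} f:=\{x:f(x)<+\infty\}$. $[t]^+:=\max\{0,t\}$ (with $[f(x)-f(y)]^+:=0$ if $f(y)=+\infty$). For $x\in\operatorname{dom} f$, the local slope is $|\nabla f|(x):=\limsup_{y\to x,\,y\neq x}\frac{[f(x)-f(y)]^+}{\rho(x,y)}\in[0,+\infty]$ (equal to $0$ at isolated points). For $\varepsilon\ge0$, $\varepsilon\operatorname{crit} f:=\{x\in\operatorname{dom} f:\ |\nabla f|(x)\le\varepsilon\}$. *)

theory Defs
  imports "HOL-Analysis.Analysis"
begin

text \<open>Extended-real-valued functions f :: 'a \<Rightarrow> ereal on a metric space model
  functions into the reals extended by +infinity.\<close>

definition efdom :: "('a \<Rightarrow> ereal) \<Rightarrow> 'a set" where
  "efdom f = {x. f x < \<infinity>}"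

text \<open>Note f x - \<infinity> = -\<infinity> in ereal, so the positive part is 0 when f y = \<infinity>.
  The outer max with 0 makes the slope 0 at isolated points (where the
  Limsup over the trivial filter is -\<infinity>); elsewhere it has no effect.\<close>
definition slope :: "('a::metric_space \<Rightarrow> ereal) \<Rightarrow> 'a \<Rightarrow> ereal" where
  "slope f x = max 0 (Limsup (at x) (\<lambda>y. max 0 (f x - f y) / ereal (dist x y)))"

definition ecrit :: "real \<Rightarrow> ('a::metric_space \<Rightarrow> ereal) \<Rightarrow> 'a set" where
  "ecrit \<epsilon> f = {x \<in> efdom f. slope f x \<le> ereal \<epsilon>}"

definition lsc :: "('a::topological_space \<Rightarrow> ereal) \<Rightarrow> bool" where
  "lsc f \<longleftrightarrow> (\<forall>x. f x \<le> Liminf (at x) f)"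

definition proper_fun :: "('a \<Rightarrow> ereal) \<Rightarrow> bool" where
  "proper_fun f \<longleftrightarrow> efdom f \<noteq> {} \<and> (\<forall>x. f x \<noteq> -\<infinity>)"

end

theory Submission
  imports Defs
begin

lemma lsc_closed:
  fixes f :: "'a::metric_space \<Rightarrow> ereal" and u :: "'a \<Rightarrow> real"
  assumes "lsc f" "continuous_on UNIV u"
  shows "closed {w. f w \<le> ereal (u w)}"
proof -
  have "open {w. ereal (u w) < f w}"
  proof (rule openI)
    fix x assume "x \<in> {w. ereal (u w) < f w}"
    hence "ereal (u x) < f x" by simp
    from ereal_dense2[OF this] obtain c where c: "ereal (u x) < ereal c" "ereal c < f x" by blast
    have "ereal c < Liminf (at x) f" using c assms(1) unfolding lsc_def
      using order_less_le_trans by blast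
    hence e1: "eventually (\<lambda>y. ereal c < f y) (at x)" using less_LiminfD by blast
    have "isCont u x" using assms(2) by (simp add: continuous_on_eq_continuous_at)
    hence "(u \<longlongrightarrow> u x) (at x)" by (simp add: isCont_def)
    hence "eventually (\<lambda>y. u y < c) (at x)" using c(1) order_tendstoD(2) by auto
    with e1 have "eventually (\<lambda>y. ereal (u y) < f y) (at x)"
    proof eventually_elim
      case (elim y)
      have "ereal (u y) < ereal c" using elim(2) by simp
      thus ?case using elim(1) by (rule less_trans)
    qed
    then obtain d where "d > 0" and d: "\<And>y. y \<noteq> x \<Longrightarrow> dist y x < d \<Longrightarrow> ereal (u y) < f y"
      by (auto simp: eventually_at)
    have ux: "ereal (u x) < f x" using c by (rule less_trans)
    show "\<exists>e>0. ball x e \<subseteq> {w. ereal (u w) < f w}"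
    proof (intro exI conjI)
      show "d > 0" by fact
      show "ball x d \<subseteq> {w. ereal (u w) < f w}"
      proof
        fix y assume "y \<in> ball x d"
        hence "dist y x < d" by (simp add: dist_commute)
        thus "y \<in> {w. ereal (u w) < f w}" using d ux by (cases "y = x") auto
      qed
    qed
  qed
  moreover have "{w. f w \<le> ereal (u w)} = - {w. ereal (u w) < f w}" by auto
  ultimately show ?thesis by (simp add: closed_def)
qed

lemma aux: "(0::real) < p \<Longrightarrow> 0 < q \<Longrightarrow> p*x \<le> 2/q \<Longrightarrow> x \<le> 2/(p*q)"
  by (simp add: field_simps)

lemma ekeland:
  fixes F :: "'a::complete_space \<Rightarrow> real"
  assumes y: "y \<in> S" and e: "\<epsilon> > 0" and lb: "\<forall>x\<in>S. c \<le> F x"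
    and cl: "\<And>v t. closed {w\<in>S. F w + \<epsilon> * dist w v \<le> t}"
  shows "\<exists>z\<in>S. F z + \<epsilon> * dist z y \<le> F y \<and> (\<forall>w\<in>S. F z \<le> F w + \<epsilon> * dist w z)"
proof -
  define T where "T v = {w\<in>S. F w + \<epsilon> * dist w v \<le> F v}" for v
  have Tsub: "T v \<subseteq> S" for v by (auto simp: T_def)
  have Trefl: "v \<in> S \<Longrightarrow> v \<in> T v" for v by (auto simp: T_def)
  have Ttrans: "w \<in> T v" if "w \<in> T u" "u \<in> T v" for w u v
  proof -
    have "dist w v \<le> dist w u + dist u v" by (rule dist_triangle)
    hence "\<epsilon> * dist w v \<le> \<epsilon> * (dist w u + dist u v)" using e
      by (intro mult_left_mono) auto
    hence "\<epsilon> * dist w v \<le> \<epsilon> * dist w u + \<epsilon> * dist u v" by (simp add: distrib_left)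
    thus ?thesis using that by (auto simp: T_def)
  qed
  have bdd: "bdd_below (F ` T v)" for v
    using lb Tsub unfolding bdd_below_def by blast
  define nxt where "nxt k v = (SOME w. w \<in> T v \<and> F w \<le> Inf (F ` T v) + 1/(Suc k))" for k::nat and v
  have nxt: "nxt k v \<in> T v \<and> F (nxt k v) \<le> Inf (F ` T v) + 1/(Suc k)" if "v \<in> S" for k v
  proof -
    have ne: "F ` T v \<noteq> {}" using Trefl[OF that] by auto
    have "Inf (F ` T v) < Inf (F ` T v) + 1/(Suc k)" by simp
    then obtain a where "a \<in> F ` T v" "a < Inf (F ` T v) + 1/(Suc k)"
      using cInf_lessD[OF ne] by blast
    then have "\<exists>w. w \<in> T v \<and> F w \<le> Inf (F ` T v) + 1/(Suc k)" by force
    thus ?thesis unfolding nxt_def by (rule someI_ex)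
  qed
  define v where "v = rec_nat y (\<lambda>k p. nxt k p)"
  have v0: "v 0 = y" and vS: "v (Suc k) = nxt k (v k)" for k by (simp_all add: v_def)
  have vinS: "v k \<in> S" for k
  proof (induct k)
    case 0 show ?case using v0 y by simp
  next
    case (Suc k)
    have "v (Suc k) \<in> T (v k)" using nxt[OF Suc] vS[of k] by simp
    thus ?case using Tsub by blast
  qed
  have vstep: "v (Suc k) \<in> T (v k)" for k using vS nxt vinS by auto
  have vmono: "v j \<in> T (v k)" if "k \<le> j" for k j
    using that
  proof (induct j rule: dec_induct)
    case base then show ?case using Trefl vinS by auto
  next
    case (step n) then show ?case using Ttrans vstep by blast
  qed
  have diam: "\<epsilon> * dist w (v (Suc k)) \<le> 1/(Suc k)" if "w \<in> T (v (Suc k))" for w k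
  proof -
    have "w \<in> T (v k)" using Ttrans that vstep by blast
    hence "Inf (F ` T (v k)) \<le> F w" using bdd by (simp add: cInf_lower)
    moreover have "F w + \<epsilon> * dist w (v (Suc k)) \<le> F (v (Suc k))" using that by (simp add: T_def)
    moreover have "F (v (Suc k)) \<le> Inf (F ` T (v k)) + 1/(Suc k)" using nxt vinS vS by auto
    ultimately show ?thesis by linarith
  qed
  have arch: "\<exists>k. 2 / (\<epsilon> * Suc k) < d" if "d > 0" for d
  proof -
    have "d * \<epsilon> / 2 > 0" using \<open>d > 0\<close> e by simp
    then obtain k where k: "inverse (real (Suc k)) < d * \<epsilon> / 2" using reals_Archimedean by blast
    have "2 / (\<epsilon> * Suc k) = (2/\<epsilon>) * inverse (real (Suc k))" by (simp add: field_simps)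
    also have "\<dots> < (2/\<epsilon>) * (d * \<epsilon> / 2)" using k e by (intro mult_strict_left_mono) auto
    also have "\<dots> = d" using e by simp
    finally show ?thesis by blast
  qed
  have close2: "dist a b \<le> 2 / (\<epsilon> * Suc k)" if "a \<in> T (v (Suc k))" "b \<in> T (v (Suc k))" for a b k
  proof -
    have "\<epsilon> * dist a (v (Suc k)) \<le> 1/(Suc k)" "\<epsilon> * dist b (v (Suc k)) \<le> 1/(Suc k)"
      using diam that by auto
    hence "\<epsilon> * (dist a (v (Suc k)) + dist b (v (Suc k))) \<le> 2/(Suc k)" by (simp add: distrib_left)
    moreover have "dist a b \<le> dist a (v (Suc k)) + dist b (v (Suc k))" by (rule dist_triangle2)
    ultimately have "\<epsilon> * dist a b \<le> 2/(Suc k)" using e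
      by (meson mult_left_mono less_imp_le order_trans)
    thus ?thesis using e aux[of \<epsilon> "real (Suc k)" "dist a b"] by simp
  qed
  have "Cauchy v"
    unfolding Cauchy_def
  proof (intro allI impI)
    fix d :: real assume "d > 0"
    then obtain k where k: "2 / (\<epsilon> * Suc k) < d" using arch by blast
    have "\<forall>m\<ge>Suc k. \<forall>n\<ge>Suc k. dist (v m) (v n) < d"
      using close2 vmono k by (meson order_le_less_trans)
    thus "\<exists>M. \<forall>m\<ge>M. \<forall>n\<ge>M. dist (v m) (v n) < d" by blast
  qed
  then obtain z where z: "v \<longlonglongrightarrow> z" using Cauchy_convergent_iff convergent_def by blast
  have zT: "z \<in> T (v k)" for k
  proof (rule Lim_in_closed_set[OF _ _ _ z])
    show "closed (T (v k))" unfolding T_def by (rule cl)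
    show "\<forall>\<^sub>F x in sequentially. v x \<in> T (v k)"
      unfolding eventually_sequentially using vmono by blast
  qed simp
  have zS: "z \<in> S" using zT Tsub by blast
  have part1: "F z + \<epsilon> * dist z y \<le> F y" using zT[of 0] v0 by (simp add: T_def)
  have part2: "F z \<le> F w + \<epsilon> * dist w z" if w: "w \<in> S" for w
  proof (rule ccontr)
    assume neg: "\<not> ?thesis"
    hence "w \<in> T z" using w by (auto simp: T_def)
    hence wT: "w \<in> T (v (Suc k))" for k using zT Ttrans by blast
    have "dist w z = 0"
    proof (rule ccontr)
      assume "dist w z \<noteq> 0"
      hence "dist w z > 0" by simp
      then obtain k where "2 / (\<epsilon> * Suc k) < dist w z" using arch by blast
      moreover have "dist w z \<le> 2 / (\<epsilon> * Suc k)" using close2 wT zT by blast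
      ultimately show False by simp
    qed
    hence "w = z" by simp
    thus False using neg by simp
  qed
  show ?thesis using zS part1 part2 by blast
qed

lemma descent:
  fixes f :: "'a::metric_space \<Rightarrow> ereal" and g :: "'a \<Rightarrow> real"
  assumes fin: "f x = ereal fx" and nm: "\<forall>w. f w \<noteq> -\<infinity>"
    and gt: "slope (\<lambda>y. ereal (g y)) x < ereal c" and lt: "ereal c < slope f x" and c: "c > 0"
  shows "\<exists>w fw. w \<noteq> x \<and> f w = ereal fw \<and> c * dist w x < fx - fw \<and> g x - g w < c * dist w x"
proof -
  define qf where "qf y = max 0 (f x - f y) / ereal (dist x y)" for y
  define qg where "qg y = max 0 (ereal (g x) - ereal (g y)) / ereal (dist x y)" for y
  have L1: "ereal c < Limsup (at x) qf"
  proof (rule ccontr)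
    assume "\<not> ?thesis"
    hence "max 0 (Limsup (at x) qf) \<le> ereal c" using c by auto
    moreover have "slope f x = max 0 (Limsup (at x) qf)" by (simp add: slope_def qf_def[abs_def])
    ultimately have "slope f x \<le> ereal c" by (simp only:)
    with lt show False by simp
  qed
  have "Limsup (at x) qg < ereal c" using gt unfolding slope_def qg_def
    by (meson max.cobounded2 order_le_less_trans)
  hence ev1: "eventually (\<lambda>y. qg y < ereal c) (at x)" using Limsup_lessD by blast
  have ev2: "eventually (\<lambda>y. y \<noteq> x) (at x)" by (simp add: eventually_at_filter)
  have "\<exists>w. ereal c < qf w \<and> qg w < ereal c \<and> w \<noteq> x"
  proof (rule ccontr)
    assume "\<not> ?thesis"
    hence H: "\<And>y. qg y < ereal c \<and> y \<noteq> x \<Longrightarrow> qf y \<le> ereal c" by (auto simp: not_less)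
    have "eventually (\<lambda>y. qf y \<le> ereal c) (at x)"
      using eventually_conj[OF ev1 ev2] by (rule eventually_mono) (rule H)
    hence "Limsup (at x) qf \<le> ereal c" by (rule Limsup_bounded)
    thus False using L1 by simp
  qed
  then obtain w where w: "ereal c < qf w" "qg w < ereal c" "w \<noteq> x" by blast
  define d where "d = dist x w"
  have d: "d > 0" "dist w x = d" using w(3) by (auto simp: d_def dist_commute)
  obtain fw where fw: "f w = ereal fw \<or> f w = \<infinity>"
    using nm by (cases "f w") auto
  show ?thesis
  proof (cases "f w = \<infinity>")
    case True
    hence "qf w = 0" unfolding qf_def using fin by simp
    thus ?thesis using w c by (simp add: zero_ereal_def)
  next
    case False
    hence fw': "f w = ereal fw" using fw by auto
    have "qf w = ereal (max 0 (fx - fw) / d)" unfolding qf_def using fin fw' d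
      by (simp add: d_def zero_ereal_def[symmetric] max_def)
    hence "c < max 0 (fx - fw) / d" using w(1) by simp
    hence "c * d < max 0 (fx - fw)" using d by (simp add: field_simps)
    hence A: "c * d < fx - fw" using c d by (smt (verit) mult_pos_pos)
    have "qg w = ereal (max 0 (g x - g w) / d)" unfolding qg_def using d
      by (simp add: d_def zero_ereal_def[symmetric] max_def)
    hence "max 0 (g x - g w) / d < c" using w(2) by simp
    hence "max 0 (g x - g w) < c * d" using d by (simp add: field_simps)
    hence B: "g x - g w < c * d" by linarith
    show ?thesis using A B fw' w(3) d by auto
  qed
qed

lemma fle:
  fixes f :: "'a \<Rightarrow> ereal"
  assumes nm: "\<forall>w. f w \<noteq> -\<infinity>"
  shows "f w \<le> ereal a \<longleftrightarrow> w \<in> efdom f \<and> real_of_ereal (f w) \<le> a"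
proof (cases "f w")
  case (real r) thus ?thesis by (simp add: efdom_def)
next
  case PInf thus ?thesis by (simp add: efdom_def)
next
  case MInf thus ?thesis using nm by simp
qed

lemma fdom:
  fixes f :: "'a \<Rightarrow> ereal"
  assumes nm: "\<forall>w. f w \<noteq> -\<infinity>" and "w \<in> efdom f"
  shows "f w = ereal (real_of_ereal (f w))"
proof (cases "f w")
  case (real r) thus ?thesis by simp
next
  case PInf thus ?thesis using assms(2) by (simp add: efdom_def)
next
  case MInf thus ?thesis using nm by simp
qed

lemma step:
  fixes f :: "'a::complete_space \<Rightarrow> ereal" and g :: "'a \<Rightarrow> real"
  assumes nm: "\<forall>w. f w \<noteq> -\<infinity>" and lb: "\<forall>x. ereal c0 \<le> f x" and lsc: "lsc f"
    and gc: "continuous_on UNIV g"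
    and h5: "\<forall>x \<in> efdom f - ecrit 0 f. slope f x > slope (\<lambda>y. ereal (g y)) x"
    and y: "y \<in> efdom f" and e: "e > 0"
  shows "\<exists>z. z \<in> ecrit e f \<and> real_of_ereal (f z) - g z \<le> real_of_ereal (f y) - g y
     \<and> e * dist z y \<le> real_of_ereal (f y) - real_of_ereal (f z)
     \<and> (\<forall>w\<in>efdom f. real_of_ereal (f w) - g w \<le> real_of_ereal (f y) - g y \<longrightarrow>
            real_of_ereal (f z) \<le> real_of_ereal (f w) + e * dist w z)"
proof -
  define F where "F w = real_of_ereal (f w)" for w
  have Fd: "w \<in> efdom f \<Longrightarrow> f w = ereal (F w)" for w using fdom[OF nm] by (simp add: F_def)
  have fl: "f w \<le> ereal a \<longleftrightarrow> w \<in> efdom f \<and> F w \<le> a" for w a using fle[OF nm] by (simp add: F_def)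
  define Hy where "Hy = F y - g y"
  define S where "S = {w. f w \<le> ereal (g w + Hy)}"
  have S_iff: "w \<in> S \<longleftrightarrow> w \<in> efdom f \<and> F w - g w \<le> Hy" for w
    unfolding S_def using fl by auto
  have yS: "y \<in> S" using S_iff y Hy_def by simp
  have lbS: "\<forall>x\<in>S. c0 \<le> F x"
  proof
    fix x assume "x \<in> S"
    hence "f x = ereal (F x)" using S_iff Fd by blast
    thus "c0 \<le> F x" using lb[rule_format, of x] by simp
  qed
  have cl: "closed {w\<in>S. F w + e * dist w v \<le> t}" for v t
  proof -
    have "{w\<in>S. F w + e * dist w v \<le> t} = {w. f w \<le> ereal (min (g w + Hy) (t - e * dist w v))}"
      using S_iff fl by auto
    moreover have "closed {w. f w \<le> ereal (min (g w + Hy) (t - e * dist w v))}"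
      by (rule lsc_closed[OF lsc]) (intro continuous_intros gc)
    ultimately show ?thesis by simp
  qed
  obtain z where zS: "z \<in> S" and z1: "F z + e * dist z y \<le> F y"
    and z2: "\<forall>w\<in>S. F z \<le> F w + e * dist w z"
    using ekeland[OF yS e lbS cl] by blast
  have zd: "z \<in> efdom f" and zH: "F z - g z \<le> Hy" using zS S_iff by auto
  have sl: "slope f z \<le> ereal e"
  proof (rule ccontr)
    assume "\<not> ?thesis"
    hence es: "ereal e < slope f z" by simp
    have "z \<notin> ecrit 0 f"
    proof
      assume "z \<in> ecrit 0 f"
      hence "slope f z \<le> ereal 0" by (simp add: ecrit_def)
      with es have "ereal e < ereal 0" by (rule less_le_trans)
      thus False using e by simp
    qed
    hence gs: "slope (\<lambda>y. ereal (g y)) z < slope f z" using h5 zd by blast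
    have "max (ereal e) (slope (\<lambda>y. ereal (g y)) z) < slope f z" using es gs by simp
    then obtain c where c1: "max (ereal e) (slope (\<lambda>y. ereal (g y)) z) < ereal c"
      and c2: "ereal c < slope f z" using ereal_dense2 by blast
    have ce: "e < c" using c1 by simp
    have cg: "slope (\<lambda>y. ereal (g y)) z < ereal c" using c1 by simp
    obtain w fw where w: "w \<noteq> z" "f w = ereal fw" "c * dist w z < F z - fw" "g z - g w < c * dist w z"
      using descent[OF Fd[OF zd] nm cg c2] ce e by auto
    have wd: "w \<in> efdom f" using w(2) by (simp add: efdom_def)
    have Fw: "F w = fw" using w(2) by (simp add: F_def)
    have "F w - g w \<le> Hy" using w(3,4) zH Fw by linarith
    hence "w \<in> S" using S_iff wd by blast
    hence "F z \<le> F w + e * dist w z" using z2 by blast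
    moreover have "e * dist w z \<le> c * dist w z" using ce by (intro mult_right_mono) auto
    ultimately show False using w(3) Fw by linarith
  qed
  show ?thesis
  proof (intro exI conjI ballI impI)
    show "z \<in> ecrit e f" using zd sl by (simp add: ecrit_def)
    show "real_of_ereal (f z) - g z \<le> real_of_ereal (f y) - g y" using zH by (simp add: Hy_def F_def)
    show "e * dist z y \<le> real_of_ereal (f y) - real_of_ereal (f z)" using z1 by (simp add: F_def)
    fix w assume "w \<in> efdom f" "real_of_ereal (f w) - g w \<le> real_of_ereal (f y) - g y"
    hence "w \<in> S" using S_iff by (simp add: Hy_def F_def)
    thus "real_of_ereal (f z) \<le> real_of_ereal (f w) + e * dist w z" using z2 by (simp add: F_def)
  qed
qed

theorem theorem3p5:
  fixes f :: "'a::complete_space \<Rightarrow> ereal" and g :: "'a \<Rightarrow> real"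
  assumes "proper_fun f" and "lsc f" and "\<exists>c::real. \<forall>x. ereal c \<le> f x"
    and "continuous_on UNIV g"
    and "\<forall>x \<in> efdom f - ecrit 0 f. slope f x > slope (\<lambda>y. ereal (g y)) x"
  shows "\<forall>x0 \<in> efdom f.
     (\<exists>xb \<in> ecrit 0 f. f x0 - ereal (g x0) \<ge> f xb - ereal (g xb))
   \<or> (\<forall>\<epsilon> :: nat \<Rightarrow> real.
        (\<forall>n\<ge>1. \<epsilon> n > 0) \<and> (\<forall>n\<ge>1. \<epsilon> (Suc n) \<le> \<epsilon> n) \<and> (\<lambda>n. \<epsilon> (Suc n)) \<longlonglongrightarrow> 0 \<longrightarrow>
        (\<exists>x :: nat \<Rightarrow> 'a. x 0 = x0
           \<and> (\<forall>n\<ge>1. x n \<in> ecrit (\<epsilon> n) f)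
           \<and> \<not> (\<exists>r. strict_mono r \<and> convergent ((\<lambda>n. x (Suc n)) \<circ> r))
           \<and> summable (\<lambda>n. \<epsilon> (Suc n) * dist (x (Suc n)) (x n))
           \<and> (\<forall>n. f (x n) - ereal (g (x n)) \<ge> f (x (Suc n)) - ereal (g (x (Suc n))))))"
proof (intro ballI)
  fix x0 assume x0d: "x0 \<in> efdom f"
  obtain c0 where lb: "\<forall>x. ereal c0 \<le> f x" using assms(3) by blast
  have nm: "\<forall>w. f w \<noteq> -\<infinity>" using assms(1) by (simp add: proper_fun_def)
  define F where "F w = real_of_ereal (f w)" for w
  define H where "H w = F w - g w" for w
  have Fd: "w \<in> efdom f \<Longrightarrow> f w = ereal (F w)" for w using fdom[OF nm] by (simp add: F_def)
  have fl: "f w \<le> ereal a \<longleftrightarrow> w \<in> efdom f \<and> F w \<le> a" for w a using fle[OF nm] by (simp add: F_def)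
  have Flb: "w \<in> efdom f \<Longrightarrow> c0 \<le> F w" for w using lb[rule_format, of w] Fd[of w] by simp
  have critd: "ecrit e f \<subseteq> efdom f" for e by (auto simp: ecrit_def)
  show "(\<exists>xb \<in> ecrit 0 f. f x0 - ereal (g x0) \<ge> f xb - ereal (g xb))
   \<or> (\<forall>\<epsilon> :: nat \<Rightarrow> real.
        (\<forall>n\<ge>1. \<epsilon> n > 0) \<and> (\<forall>n\<ge>1. \<epsilon> (Suc n) \<le> \<epsilon> n) \<and> (\<lambda>n. \<epsilon> (Suc n)) \<longlonglongrightarrow> 0 \<longrightarrow>
        (\<exists>x :: nat \<Rightarrow> 'a. x 0 = x0
           \<and> (\<forall>n\<ge>1. x n \<in> ecrit (\<epsilon> n) f)
           \<and> \<not> (\<exists>r. strict_mono r \<and> convergent ((\<lambda>n. x (Suc n)) \<circ> r))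
           \<and> summable (\<lambda>n. \<epsilon> (Suc n) * dist (x (Suc n)) (x n))
           \<and> (\<forall>n. f (x n) - ereal (g (x n)) \<ge> f (x (Suc n)) - ereal (g (x (Suc n))))))"
  proof (cases "\<exists>xb \<in> ecrit 0 f. f x0 - ereal (g x0) \<ge> f xb - ereal (g xb)")
    case True then show ?thesis by blast
  next
    case False
    have notA: "H x0 < H xb" if "xb \<in> ecrit 0 f" for xb
    proof -
      have "xb \<in> efdom f" using that critd by blast
      hence "\<not> ereal (F xb) - ereal (g xb) \<le> ereal (F x0) - ereal (g x0)"
        using False that Fd x0d by force
      thus ?thesis by (simp add: H_def)
    qed
    show ?thesis
    proof (intro disjI2 allI impI)
      fix \<epsilon> :: "nat \<Rightarrow> real"
      assume "(\<forall>n\<ge>1. \<epsilon> n > 0) \<and> (\<forall>n\<ge>1. \<epsilon> (Suc n) \<le> \<epsilon> n) \<and> (\<lambda>n. \<epsilon> (Suc n)) \<longlonglongrightarrow> 0"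
      hence pos: "\<And>n. \<epsilon> (Suc n) > 0" and lim: "(\<lambda>n. \<epsilon> (Suc n)) \<longlonglongrightarrow> 0" by auto
      define P where "P e y z \<longleftrightarrow> z \<in> ecrit e f \<and> H z \<le> H y \<and> e * dist z y \<le> F y - F z
        \<and> (\<forall>w\<in>efdom f. H w \<le> H y \<longrightarrow> F z \<le> F w + e * dist w z)" for e y z
      define stp where "stp e y = (SOME z. P e y z)" for e y
      have stp: "P e y (stp e y)" if "y \<in> efdom f" "e > 0" for e y
      proof -
        have "\<exists>z. P e y z" using step[OF nm lb assms(2) assms(4) assms(5) that]
          unfolding P_def H_def F_def by blast
        thus ?thesis unfolding stp_def by (rule someI_ex)
      qed
      define x where "x = rec_nat x0 (\<lambda>n p. stp (\<epsilon> (Suc n)) p)"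
      have x0: "x 0 = x0" and xS: "x (Suc n) = stp (\<epsilon> (Suc n)) (x n)" for n by (simp_all add: x_def)
      have xd: "x n \<in> efdom f" for n
      proof (induct n)
        case 0 show ?case using x0 x0d by simp
      next
        case (Suc n)
        have "P (\<epsilon> (Suc n)) (x n) (x (Suc n))" using stp[OF Suc pos] xS by simp
        thus ?case using critd unfolding P_def by blast
      qed
      have xP: "P (\<epsilon> (Suc n)) (x n) (x (Suc n))" for n using stp[OF xd pos] xS by simp
      have crit: "x (Suc n) \<in> ecrit (\<epsilon> (Suc n)) f" for n using xP unfolding P_def by blast
      have Hdec: "H (x (Suc n)) \<le> H (x n)" for n using xP unfolding P_def by blast
      have dstep: "\<epsilon> (Suc n) * dist (x (Suc n)) (x n) \<le> F (x n) - F (x (Suc n))" for n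
        using xP unfolding P_def by blast
      have ek: "\<And>w. w \<in> efdom f \<Longrightarrow> H w \<le> H (x n) \<Longrightarrow> F (x (Suc n)) \<le> F w + \<epsilon> (Suc n) * dist w (x (Suc n))" for n
        using xP unfolding P_def by blast
      have Hmono: "H (x j) \<le> H (x n)" if "n \<le> j" for n j
        using that
      proof (induct j rule: dec_induct)
        case base then show ?case by simp
      next
        case (step m) then show ?case using Hdec[of m] by linarith
      qed
      have part_crit: "\<forall>n\<ge>1. x n \<in> ecrit (\<epsilon> n) f"
      proof (intro allI impI)
        fix n :: nat assume "n \<ge> 1"
        then obtain m where "n = Suc m" by (cases n) auto
        thus "x n \<in> ecrit (\<epsilon> n) f" using crit by simp
      qed
      have part_sum: "summable (\<lambda>n. \<epsilon> (Suc n) * dist (x (Suc n)) (x n))"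
      proof (rule summableI_nonneg_bounded)
        fix n show "0 \<le> \<epsilon> (Suc n) * dist (x (Suc n)) (x n)" using pos[of n] by simp
      next
        fix n
        have "(\<Sum>i<n. \<epsilon> (Suc i) * dist (x (Suc i)) (x i)) \<le> (\<Sum>i<n. F (x i) - F (x (Suc i)))"
          by (rule sum_mono) (rule dstep)
        also have "\<dots> = F (x 0) - F (x n)" by (rule sum_lessThan_telescope')
        also have "\<dots> \<le> F x0 - c0" using Flb[OF xd[of n]] x0 by simp
        finally show "(\<Sum>i<n. \<epsilon> (Suc i) * dist (x (Suc i)) (x i)) \<le> F x0 - c0" .
      qed
      have part_mono: "\<forall>n. f (x n) - ereal (g (x n)) \<ge> f (x (Suc n)) - ereal (g (x (Suc n)))"
      proof
        fix n
        show "f (x n) - ereal (g (x n)) \<ge> f (x (Suc n)) - ereal (g (x (Suc n)))"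
          using Hdec[of n] Fd[OF xd[of n]] Fd[OF xd[of "Suc n"]] by (simp add: H_def)
      qed
      have part_nc: "\<not> (\<exists>r. strict_mono r \<and> convergent ((\<lambda>n. x (Suc n)) \<circ> r))"
      proof
        assume "\<exists>r. strict_mono r \<and> convergent ((\<lambda>n. x (Suc n)) \<circ> r)"
        then obtain r xb where r: "strict_mono r" and conv: "(\<lambda>k. x (Suc (r k))) \<longlonglongrightarrow> xb"
          unfolding convergent_def o_def by blast
        have rk: "k \<le> r k" for k using seq_suble[OF r] by simp
        have xbn: "xb \<in> efdom f \<and> F xb \<le> g xb + H (x n)" for n
        proof -
          have "xb \<in> {w. f w \<le> ereal (g w + H (x n))}"
          proof (rule Lim_in_closed_set[OF _ _ _ conv])
            show "closed {w. f w \<le> ereal (g w + H (x n))}"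
              by (rule lsc_closed[OF assms(2)]) (intro continuous_intros assms(4))
            show "\<forall>\<^sub>F k in sequentially. x (Suc (r k)) \<in> {w. f w \<le> ereal (g w + H (x n))}"
              unfolding eventually_sequentially
            proof (intro exI allI impI)
              fix k assume "n \<le> k"
              hence "n \<le> Suc (r k)" using rk[of k] by simp
              hence "H (x (Suc (r k))) \<le> H (x n)" by (rule Hmono)
              thus "x (Suc (r k)) \<in> {w. f w \<le> ereal (g w + H (x n))}"
                using fl xd by (simp add: H_def)
            qed
          qed simp
          thus ?thesis using fl by simp
        qed
        have xbd: "xb \<in> efdom f" using xbn by blast
        have Hxb: "H xb \<le> H (x n)" for n using xbn[of n] by (simp add: H_def)
        show False
        proof (cases "xb \<in> ecrit 0 f")
          case True
          thus False using notA[OF True] Hxb[of 0] x0 by simp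
        next
          case False
          hence gs: "slope (\<lambda>y. ereal (g y)) xb < slope f xb" using assms(5) xbd by blast
          have sp: "0 < slope f xb" using False xbd by (auto simp: ecrit_def not_le zero_ereal_def)
          have "max 0 (slope (\<lambda>y. ereal (g y)) xb) < slope f xb" using gs sp by simp
          then obtain c where c1: "max 0 (slope (\<lambda>y. ereal (g y)) xb) < ereal c"
            and c2: "ereal c < slope f xb" using ereal_dense2 by blast
          have cp: "0 < c" using c1 by simp
          have cg: "slope (\<lambda>y. ereal (g y)) xb < ereal c" using c1 by simp
          obtain w fw where w: "w \<noteq> xb" "f w = ereal fw" "c * dist w xb < F xb - fw" "g xb - g w < c * dist w xb"
            using descent[OF Fd[OF xbd] nm cg c2 cp] by auto
          have wd: "w \<in> efdom f" using w(2) by (simp add: efdom_def)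
          have Fw: "F w = fw" using w(2) by (simp add: F_def)
          have dpos: "0 \<le> c * dist w xb" using cp by simp
          have FwF: "F w < F xb" using w(3) Fw dpos by linarith
          have HwH: "H w < H xb" using w(3,4) Fw by (simp add: H_def)
          have ekw: "F (x (Suc n)) \<le> F w + \<epsilon> (Suc n) * dist w (x (Suc n))" for n
            using ek[OF wd] HwH Hxb[of n] by (meson less_imp_le order_trans)
          define \<delta> where "\<delta> = (F xb - F w) / 2"
          have dp: "\<delta> > 0" using FwF by (simp add: \<delta>_def)
          have "(\<lambda>k. \<epsilon> (Suc (r k))) \<longlonglongrightarrow> 0"
            using LIMSEQ_subseq_LIMSEQ[OF lim r] by (simp add: o_def)
          moreover have "(\<lambda>k. dist w (x (Suc (r k)))) \<longlonglongrightarrow> dist w xb"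
            by (intro tendsto_intros conv)
          ultimately have "(\<lambda>k. \<epsilon> (Suc (r k)) * dist w (x (Suc (r k)))) \<longlonglongrightarrow> 0 * dist w xb"
            by (rule tendsto_mult)
          hence "eventually (\<lambda>k. \<epsilon> (Suc (r k)) * dist w (x (Suc (r k))) < \<delta>) sequentially"
            using dp by (intro order_tendstoD(2)) auto
          hence ev: "eventually (\<lambda>k. x (Suc (r k)) \<in> {v. f v \<le> ereal (F w + \<delta>)}) sequentially"
          proof (rule eventually_mono)
            fix k assume "\<epsilon> (Suc (r k)) * dist w (x (Suc (r k))) < \<delta>"
            hence "F (x (Suc (r k))) \<le> F w + \<delta>" using ekw[of "r k"] by linarith
            thus "x (Suc (r k)) \<in> {v. f v \<le> ereal (F w + \<delta>)}" using fl xd by simp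
          qed
          have "xb \<in> {v. f v \<le> ereal (F w + \<delta>)}"
          proof (rule Lim_in_closed_set[OF _ ev _ conv])
            show "closed {v. f v \<le> ereal (F w + \<delta>)}"
              using lsc_closed[OF assms(2), of "\<lambda>_. F w + \<delta>"] by simp
          qed simp
          hence "F xb \<le> F w + \<delta>" using fl by simp
          thus False using FwF unfolding \<delta>_def by (simp add: field_simps)
        qed
      qed
      show "\<exists>x :: nat \<Rightarrow> 'a. x 0 = x0
           \<and> (\<forall>n\<ge>1. x n \<in> ecrit (\<epsilon> n) f)
           \<and> \<not> (\<exists>r. strict_mono r \<and> convergent ((\<lambda>n. x (Suc n)) \<circ> r))
           \<and> summable (\<lambda>n. \<epsilon> (Suc n) * dist (x (Suc n)) (x n))
           \<and> (\<forall>n. f (x n) - ereal (g (x n)) \<ge> f (x (Suc n)) - ereal (g (x (Suc n))))"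
        using x0 part_crit part_nc part_sum part_mono by blast
    qed
  qed
qed

end
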